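(* Let $f:\mathbb{N}\to\mathbb{N}$ be an unbounded non-decreasing function with $f(x)\le x$ for all $x$, and define $g:\mathbb{N}\to\mathbb{N}$ by $g(p)=\max\{i: f(i)\le p\}$. Then for every finite simple graph $G$ and every non-negative integer $r$, $$\nabla_r(G)\le N_f(G,2r+1)^{2r+1}\, g(2r+1)^2.$$
   Context: For a finite simple graph $G$, a function $f:\mathbb{N}\to\mathbb{N}$ and a positive integer $p$, $N_f(G,p)$ denotes the minimum number of colours in a colouring of the edges of $G$ such that every cycle $\gamma$ of $G$ receives at least $\min(f(|\gamma|),p+1)$ distinct colours, where $|\gamma|$ is the length of $\gamma$. A simple graph $H$ is a shallow minor of $G$ at depth $r$ if there are pairwise vertex-disjoint subtrees $T_1,\dots,T_k$ of $G$, each having a root from which every vertex of the tree is at distance at most $r$ in the tree, such that $H$ is isomorphic to a subgraph of the graph with vertex set $\{T_1,\dots,T_k\}$ in which $T_i,T_j$ are adjacent iff some edge of $G$ joins a vertex of $T_i$ to a vertex of $T_j$. $\nabla_r(G)$ is the maximum of $\|H\|/|H|$ over all shallow minors $H$ of $G$ at depth $r$, where $\|H\|$ is the number of edges and $|H|$ the number of vertices. *)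

theory Defs
  imports Complex_Main
begin

definition simple_graph :: "'a set \<Rightarrow> 'a set set \<Rightarrow> bool" where
  "simple_graph V E \<longleftrightarrow> finite V \<and> (\<forall>e\<in>E. e \<subseteq> V \<and> card e = 2)"

definition is_cycle :: "'a set set \<Rightarrow> 'a list \<Rightarrow> bool" where
  "is_cycle E vs \<longleftrightarrow> 3 \<le> length vs \<and> distinct vs \<and>
     (\<forall>i < length vs. {vs ! i, vs ! ((i + 1) mod length vs)} \<in> E)"

definition cycle_edges :: "'a list \<Rightarrow> 'a set set" where
  "cycle_edges vs = {{vs ! i, vs ! ((i + 1) mod length vs)} | i. i < length vs}"

definition good_colouring :: "(nat \<Rightarrow> nat) \<Rightarrow> 'a set set \<Rightarrow> nat \<Rightarrow> ('a set \<Rightarrow> nat) \<Rightarrow> bool" where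
  "good_colouring f E p c \<longleftrightarrow>
     (\<forall>vs. is_cycle E vs \<longrightarrow> min (f (length vs)) (p + 1) \<le> card (c ` cycle_edges vs))"

definition Nf :: "(nat \<Rightarrow> nat) \<Rightarrow> 'a set \<Rightarrow> 'a set set \<Rightarrow> nat \<Rightarrow> nat" where
  "Nf f V E p = (LEAST k. \<exists>c. good_colouring f E p c \<and> card (c ` E) = k)"

definition walk :: "'a set set \<Rightarrow> 'a list \<Rightarrow> bool" where
  "walk E vs \<longleftrightarrow> vs \<noteq> [] \<and> (\<forall>i. Suc i < length vs \<longrightarrow> {vs ! i, vs ! Suc i} \<in> E)"

definition connected_graph :: "'a set \<Rightarrow> 'a set set \<Rightarrow> bool" where
  "connected_graph V E \<longleftrightarrow>
     (\<forall>u\<in>V. \<forall>v\<in>V. \<exists>vs. walk E vs \<and> hd vs = u \<and> last vs = v)"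

definition is_tree :: "'a set \<Rightarrow> 'a set set \<Rightarrow> bool" where
  "is_tree V E \<longleftrightarrow> simple_graph V E \<and> V \<noteq> {} \<and> connected_graph V E \<and>
     \<not> (\<exists>vs. is_cycle E vs)"

definition shallow_tree :: "'a set \<Rightarrow> 'a set set \<Rightarrow> nat \<Rightarrow> 'a set \<Rightarrow> bool" where
  "shallow_tree V E r B \<longleftrightarrow> (\<exists>ET root. B \<subseteq> V \<and> ET \<subseteq> E \<and> is_tree B ET \<and> root \<in> B \<and>
     (\<forall>v\<in>B. \<exists>vs. walk ET vs \<and> hd vs = root \<and> last vs = v \<and> length vs \<le> r + 1))"

text \<open>A shallow minor at depth r, with vertices the branch sets (vertex sets of the
  trees T_i) and edges a subset of the adjacencies between branch sets.  Every shallow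
  minor in the sense of the paper is isomorphic to one of these and vice versa.\<close>
definition shallow_minor :: "'a set \<Rightarrow> 'a set set \<Rightarrow> nat \<Rightarrow> 'a set set \<Rightarrow> 'a set set set \<Rightarrow> bool" where
  "shallow_minor V E r W F \<longleftrightarrow>
     (\<forall>B\<in>W. shallow_tree V E r B) \<and>
     (\<forall>B1\<in>W. \<forall>B2\<in>W. B1 \<noteq> B2 \<longrightarrow> B1 \<inter> B2 = {}) \<and>
     (\<forall>e\<in>F. \<exists>B1 B2. e = {B1, B2} \<and> B1 \<in> W \<and> B2 \<in> W \<and> B1 \<noteq> B2 \<and>
        (\<exists>x\<in>B1. \<exists>y\<in>B2. {x, y} \<in> E))"

definition nabla :: "'a set \<Rightarrow> 'a set set \<Rightarrow> nat \<Rightarrow> real" where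
  "nabla V E r = Max {real (card F) / real (card W) | W F. shallow_minor V E r W F}"

end

theory Submission
  imports Defs
begin


fun wedges :: "'a list \<Rightarrow> 'a set set" where
  "wedges (x # y # xs) = insert {x, y} (wedges (y # xs))"
| "wedges _ = {}"

lemma wedges_nth: "wedges vs = {{vs ! i, vs ! Suc i} | i. Suc i < length vs}"
proof (induction vs rule: wedges.induct)
  case (1 x y xs)
  have "{{(x # y # xs) ! i, (x # y # xs) ! Suc i} | i. Suc i < length (x # y # xs)}
     = insert {x, y} {{(y # xs) ! i, (y # xs) ! Suc i} | i. Suc i < length (y # xs)}"
    (is "?L = ?R")
  proof
    show "?L \<subseteq> ?R"
    proof
      fix a assume "a \<in> ?L"
      then obtain i where i: "a = {(x # y # xs) ! i, (x # y # xs) ! Suc i}" "Suc i < length (x # y # xs)" by blast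
      show "a \<in> ?R"
      proof (cases i)
        case 0 then show ?thesis using i by simp
      next
        case (Suc j) then show ?thesis using i by auto
      qed
    qed
  next
    show "?R \<subseteq> ?L"
    proof
      fix a assume "a \<in> ?R"
      then show "a \<in> ?L"
      proof
        assume "a = {x, y}" then show ?thesis by (intro CollectI exI[of _ 0]) auto
      next
        assume "a \<in> {{(y # xs) ! i, (y # xs) ! Suc i} | i. Suc i < length (y # xs)}"
        then obtain i where "a = {(y # xs) ! i, (y # xs) ! Suc i}" "Suc i < length (y # xs)" by blast
        then show ?thesis by (intro CollectI exI[of _ "Suc i"]) auto
      qed
    qed
  qed
  then show ?case using 1 by (simp only: wedges.simps)
qed auto

lemma walk_iff: "walk E vs \<longleftrightarrow> vs \<noteq> [] \<and> wedges vs \<subseteq> E"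
  unfolding walk_def wedges_nth by blast

lemma cycle_edges_eq:
  assumes "vs \<noteq> []"
  shows "cycle_edges vs = insert {last vs, hd vs} (wedges vs)"
proof -
  let ?n = "length vs"
  have n: "?n > 0" using assms by simp
  show ?thesis
  proof
    show "cycle_edges vs \<subseteq> insert {last vs, hd vs} (wedges vs)"
    proof
      fix a assume "a \<in> cycle_edges vs"
      then obtain i where i: "a = {vs ! i, vs ! ((i + 1) mod ?n)}" "i < ?n"
        unfolding cycle_edges_def by blast
      show "a \<in> insert {last vs, hd vs} (wedges vs)"
      proof (cases "Suc i < ?n")
        case True
        then have "a = {vs ! i, vs ! Suc i}" using i by simp
        then have "\<exists>j. a = {vs ! j, vs ! Suc j} \<and> Suc j < ?n" using True by (intro exI[of _ i]) simp
        then show ?thesis unfolding wedges_nth by simp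
      next
        case False
        then have "i = ?n - 1" using i by simp
        then have "a = {last vs, hd vs}" using i assms
          by (simp add: last_conv_nth hd_conv_nth)
        then show ?thesis by simp
      qed
    qed
  next
    show "insert {last vs, hd vs} (wedges vs) \<subseteq> cycle_edges vs"
    proof
      fix a assume "a \<in> insert {last vs, hd vs} (wedges vs)"
      then show "a \<in> cycle_edges vs"
      proof
        assume a: "a = {last vs, hd vs}"
        have "a = {vs ! (?n - 1), vs ! (((?n - 1) + 1) mod ?n)}"
          using a assms n by (simp add: last_conv_nth hd_conv_nth)
        then have "\<exists>i. a = {vs ! i, vs ! ((i + 1) mod ?n)} \<and> i < ?n" using n by (intro exI[of _ "?n - 1"]) simp
        then show ?thesis unfolding cycle_edges_def by simp
      next
        assume "a \<in> wedges vs"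
        then obtain i where "a = {vs ! i, vs ! Suc i}" "Suc i < ?n" unfolding wedges_nth by blast
        then have "\<exists>j. a = {vs ! j, vs ! ((j + 1) mod ?n)} \<and> j < ?n" by (intro exI[of _ i]) simp
        then show ?thesis unfolding cycle_edges_def by simp
      qed
    qed
  qed
qed

lemma is_cycle_iff: "is_cycle E vs \<longleftrightarrow> 3 \<le> length vs \<and> distinct vs \<and> cycle_edges vs \<subseteq> E"
  unfolding is_cycle_def cycle_edges_def by blast

lemma wedges_append:
  "wedges (xs @ ys) = wedges xs \<union> wedges ys \<union> (if xs = [] \<or> ys = [] then {} else {{last xs, hd ys}})"
proof (induction xs)
  case Nil then show ?case by simp
next
  case (Cons x xs)
  then show ?case by (cases xs; cases ys) auto
qed

lemma wedges_Cons: "xs \<noteq> [] \<Longrightarrow> wedges (x # xs) = insert {x, hd xs} (wedges xs)"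
  by (cases xs) auto

lemma wedges_rev: "wedges (rev xs) = wedges xs"
proof (induction xs)
  case Nil then show ?case by simp
next
  case (Cons x xs)
  show ?case
  proof (cases "xs = []")
    case True then show ?thesis by simp
  next
    case False
    then show ?thesis using Cons wedges_append[of "rev xs" "[x]"] wedges_Cons[OF False, of x]
      by (auto simp: last_rev insert_commute)
  qed
qed

lemma wedges_finite: "finite (wedges vs)"
  by (induction vs rule: wedges.induct) auto

lemma wedges_card: "card (wedges vs) \<le> length vs - 1"
proof (induction vs rule: wedges.induct)
  case (1 x y xs)
  then show ?case using card_insert_le_m1 by (simp add: card_insert_if wedges_finite)
qed auto

lemma set_wedges: "vs \<noteq> [] \<Longrightarrow> set vs \<subseteq> insert (hd vs) (\<Union> (wedges vs))"
  by (induction vs rule: wedges.induct) auto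

lemma wedges_take: "wedges (take k xs) \<subseteq> wedges xs"
  using wedges_append[of "take k xs" "drop k xs"] by (metis Un_upper1 append_take_drop_id le_supI1)

lemma wedges_app_tl:
  assumes "xs \<noteq> []" "ys \<noteq> []" "last xs = hd ys"
  shows "wedges (xs @ tl ys) \<subseteq> wedges xs \<union> wedges ys"
proof (cases "tl ys = []")
  case True then show ?thesis by simp
next
  case False
  have "ys = hd ys # tl ys" using assms by simp
  then have "wedges ys = insert {hd ys, hd (tl ys)} (wedges (tl ys))"
    using wedges_Cons[OF False] by metis
  then show ?thesis using wedges_append[of xs "tl ys"] assms False by auto
qed

lemma shorten:
  "vs \<noteq> [] \<Longrightarrow> \<exists>ws. ws \<noteq> [] \<and> distinct ws \<and> hd ws = hd vs \<and> last ws = last vs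
     \<and> wedges ws \<subseteq> wedges vs \<and> set ws \<subseteq> set vs"
proof (induction "length vs" arbitrary: vs rule: less_induct)
  case less
  show ?case
  proof (cases "distinct vs")
    case True then show ?thesis using less by blast
  next
    case False
    then obtain xs ys zs y where vs: "vs = xs @ [y] @ ys @ [y] @ zs" using not_distinct_decomp by blast
    let ?u = "xs @ [y] @ zs"
    have len: "length ?u < length vs" using vs by simp
    have "wedges ([y] @ ys @ [y] @ zs) = wedges (([y] @ ys) @ ([y] @ zs))" by simp
    also have "\<dots> \<supseteq> wedges ([y] @ zs)" unfolding wedges_append[of "[y] @ ys"] by blast
    finally have w1: "wedges ([y] @ zs) \<subseteq> wedges ([y] @ ys @ [y] @ zs)" .
    have w2: "wedges ?u \<subseteq> wedges vs"
      using w1 unfolding vs wedges_append[of xs] by auto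
    have h2: "hd ?u = hd vs" using vs by (cases xs) auto
    have l2: "last ?u = last vs" using vs by (cases zs rule: rev_cases) auto
    have s2: "set ?u \<subseteq> set vs" using vs by auto
    have ne: "?u \<noteq> []" by simp
    obtain ws where ws: "ws \<noteq> [] \<and> distinct ws \<and> hd ws = hd ?u \<and> last ws = last ?u
     \<and> wedges ws \<subseteq> wedges ?u \<and> set ws \<subseteq> set ?u"
      using less(1)[OF len ne] by blast
    have "ws \<noteq> [] \<and> distinct ws \<and> hd ws = hd vs \<and> last ws = last vs
     \<and> wedges ws \<subseteq> wedges vs \<and> set ws \<subseteq> set vs"
      using ws w2 h2 l2 s2 by (metis order_trans)
    then show ?thesis by blast
  qed
qed



lemma degen:
  fixes W :: "'b set" and F :: "'b set set"
  assumes fin: "finite W"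
    and Fe: "\<And>e. e \<in> F \<Longrightarrow> \<exists>a b. e = {a,b} \<and> a \<in> W \<and> b \<in> W \<and> a \<noteq> b"
    and low: "\<And>U. U \<subseteq> W \<Longrightarrow> U \<noteq> {} \<Longrightarrow> \<exists>B\<in>U. card {B'\<in>U. {B,B'} \<in> F} \<le> d"
  shows "card F \<le> d * card W"
proof -
  have main: "card {e\<in>F. e \<subseteq> U} \<le> d * card U" if "U \<subseteq> W" for U
    using that
  proof (induction "card U" arbitrary: U)
    case 0
    then have "U = {}" using fin finite_subset by (metis card_0_eq)
    then have "{e\<in>F. e \<subseteq> U} = {}" using Fe by fastforce
    then show ?case by (metis card.empty zero_le)
  next
    case (Suc n)
    have finU: "finite U" using Suc.prems fin finite_subset by blast
    then have "U \<noteq> {}" using Suc.hyps(2) by auto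
    then obtain B where B: "B \<in> U" "card {B'\<in>U. {B,B'} \<in> F} \<le> d" using low Suc.prems by blast
    let ?U' = "U - {B}"
    have cU: "card ?U' = n" using Suc.hyps(2) B finU by simp
    have IH: "card {e\<in>F. e \<subseteq> ?U'} \<le> d * n" using Suc.hyps(1)[of ?U'] cU Suc.prems by auto
    have split: "{e\<in>F. e \<subseteq> U} \<subseteq> {e\<in>F. e \<subseteq> ?U'} \<union> (\<lambda>B'. {B,B'}) ` {B'\<in>U. {B,B'} \<in> F}"
    proof
      fix e assume e: "e \<in> {e\<in>F. e \<subseteq> U}"
      show "e \<in> {e\<in>F. e \<subseteq> ?U'} \<union> (\<lambda>B'. {B,B'}) ` {B'\<in>U. {B,B'} \<in> F}"
      proof (cases "B \<in> e")
        case False then show ?thesis using e by auto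
      next
        case True
        obtain a b where ab: "e = {a,b}" "a \<noteq> b" using Fe e by blast
        define o' where "o' = (if a = B then b else a)"
        have eo: "e = {B, o'}" using True ab by (auto simp: o'_def)
        have "o' \<in> U" using e eo by auto
        then have "o' \<in> {B'\<in>U. {B,B'} \<in> F}" using e eo by auto
        then show ?thesis using eo by blast
      qed
    qed
    have f1: "finite {e\<in>F. e \<subseteq> ?U'}"
      by (rule finite_subset[of _ "Pow ?U'"]) (use finU in auto)
    have f2: "finite ((\<lambda>B'. {B,B'}) ` {B'\<in>U. {B,B'} \<in> F})" using finU by simp
    have "card {e\<in>F. e \<subseteq> U} \<le> card ({e\<in>F. e \<subseteq> ?U'} \<union> (\<lambda>B'. {B,B'}) ` {B'\<in>U. {B,B'} \<in> F})"
      by (rule card_mono[OF _ split]) (use f1 f2 in simp)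
    also have "\<dots> \<le> card {e\<in>F. e \<subseteq> ?U'} + card ((\<lambda>B'. {B,B'}) ` {B'\<in>U. {B,B'} \<in> F})"
      by (rule card_Un_le)
    also have "\<dots> \<le> d * n + d" using IH card_image_le[of "{B'\<in>U. {B,B'} \<in> F}" "\<lambda>B'. {B,B'}"] B(2) finU
      by simp
    finally show ?case using Suc.hyps(2) by (metis mult_Suc_right add.commute)
  qed
  have sub: "e \<subseteq> W" if e_in: "e \<in> F" for e
  proof -
    obtain a b where "e = {a,b}" "a \<in> W" "b \<in> W" using Fe[OF e_in] by blast
    then show ?thesis by simp
  qed
  then have "{e\<in>F. e \<subseteq> W} = F" by blast
  then show ?thesis using main[of W] by simp
qed

lemma long_cycle:
  fixes U :: "'b set" and F :: "'b set set"
  assumes fin: "finite U" and ne: "U \<noteq> {}"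
    and Fe: "\<And>e. e \<in> F \<Longrightarrow> \<exists>a b. e = {a,b} \<and> a \<noteq> b"
    and deg: "\<And>B. B \<in> U \<Longrightarrow> d < card {B'\<in>U. {B,B'} \<in> F}"
  shows "\<exists>qs. qs \<noteq> [] \<and> distinct qs \<and> set qs \<subseteq> U \<and> d + 2 \<le> length qs \<and> wedges qs \<subseteq> F
     \<and> {last qs, hd qs} \<in> F"
proof -
  let ?P = "{ps. ps \<noteq> [] \<and> distinct ps \<and> set ps \<subseteq> U \<and> wedges ps \<subseteq> F}"
  have finP: "finite ?P"
  proof (rule finite_subset[OF _ finite_lists_length_le[OF fin, of "card U"]])
    show "?P \<subseteq> {xs. set xs \<subseteq> U \<and> length xs \<le> card U}"
    proof
      fix xs assume "xs \<in> ?P"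
      then have d: "distinct xs" and s: "set xs \<subseteq> U" by auto
      have "length xs \<le> card U" using card_mono[OF fin s] distinct_card[OF d] by simp
      then show "xs \<in> {xs. set xs \<subseteq> U \<and> length xs \<le> card U}" using s by simp
    qed
  qed
  obtain B where "B \<in> U" using ne by blast
  then have "[B] \<in> ?P" by simp
  then have neP: "length ` ?P \<noteq> {}" by blast
  have "Max (length ` ?P) \<in> length ` ?P" using Max_in[OF _ neP] finP by simp
  then obtain ps where ps1: "ps \<in> ?P" and psm: "length ps = Max (length ` ?P)" by auto
  have ps2: "\<forall>qs\<in>?P. length qs \<le> length ps" using psm finP by simp
  define B0 where "B0 = hd ps"
  have psne: "ps \<noteq> []" using ps1 by simp
  have B0U: "B0 \<in> U" using ps1 by (auto simp: B0_def)
  define Nb where "Nb = {B'\<in>U. {B0,B'} \<in> F}"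
  have cardNb: "d < card Nb" using deg B0U Nb_def by simp
  have Nb_ps: "Nb \<subseteq> set ps"
  proof
    fix B' assume B': "B' \<in> Nb"
    show "B' \<in> set ps"
    proof (rule ccontr)
      assume nin: "B' \<notin> set ps"
      have "B' # ps \<in> ?P" using ps1 nin B' wedges_Cons[of ps B'] psne
        by (auto simp: Nb_def B0_def insert_commute)
      then show False using ps2 by fastforce
    qed
  qed
  have B0_notin: "B0 \<notin> Nb"
  proof
    assume "B0 \<in> Nb"
    then have "{B0} \<in> F" by (simp add: Nb_def)
    then show False using Fe by (metis doubleton_eq_iff insert_absorb2)
  qed
  define I where "I = {i. i < length ps \<and> ps ! i \<in> Nb}"
  have "nth ps ` I = Nb"
  proof
    show "nth ps ` I \<subseteq> Nb" by (auto simp: I_def)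
    show "Nb \<subseteq> nth ps ` I"
    proof
      fix x assume x: "x \<in> Nb"
      then obtain i where i: "i < length ps" "ps ! i = x" using Nb_ps by (meson in_set_conv_nth subsetD)
      then have "i \<in> I" using x by (simp add: I_def)
      then show "x \<in> nth ps ` I" using i by blast
    qed
  qed
  moreover have "inj_on (nth ps) I" using ps1 by (auto simp: I_def inj_on_def nth_eq_iff_index_eq)
  ultimately have cI: "card I = card Nb" using card_image by metis
  have finI: "finite I" by (simp add: I_def)
  have Ine: "I \<noteq> {}" using cI cardNb by auto
  define j where "j = Max I"
  have jI: "j \<in> I" using finI Ine by (simp add: j_def)
  have "I \<subseteq> {1..j}"
  proof
    fix i assume i: "i \<in> I"
    have "i \<le> j" using Max_ge[OF finI i] j_def by simp
    moreover have "i \<noteq> 0"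
    proof
      assume "i = 0" then show False using i B0_notin psne by (simp add: I_def B0_def hd_conv_nth)
    qed
    ultimately show "i \<in> {1..j}" by simp
  qed
  then have "card I \<le> j" using card_mono[of "{1..j}" I] by simp
  then have jd: "d + 1 \<le> j" using cI cardNb by simp
  have jl: "j < length ps" using jI by (simp add: I_def)
  let ?qs = "take (Suc j) ps"
  have "?qs \<noteq> []" using psne by simp
  then have "last ?qs = ?qs ! (length ?qs - 1)" by (rule last_conv_nth)
  also have "\<dots> = ps ! j" using jl by simp
  finally have "last ?qs = ps ! j" .
  moreover have "hd ?qs = B0" using psne by (simp add: B0_def)
  moreover have "ps ! j \<in> Nb" using jI by (simp add: I_def)
  ultimately have "{last ?qs, hd ?qs} \<in> F" by (simp add: Nb_def insert_commute)
  moreover have "?qs \<noteq> []" "distinct ?qs" "set ?qs \<subseteq> U" "d + 2 \<le> length ?qs" "wedges ?qs \<subseteq> F"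
    using ps1 jl jd set_take_subset[of "Suc j" ps] wedges_take[of "Suc j" ps] by auto
  ultimately show ?thesis by blast
qed



locale liftctx =
  fixes E :: "'a set set" and W :: "'a set set" and F :: "'a set set set"
    and c :: "'a set \<Rightarrow> nat" and S :: "nat set"
    and ET :: "'a set \<Rightarrow> 'a set set" and rt :: "'a set \<Rightarrow> 'a"
    and rw :: "'a set \<Rightarrow> 'a \<Rightarrow> 'a list"
    and ge :: "'a set set \<Rightarrow> 'a set" and att :: "'a set set \<Rightarrow> 'a set \<Rightarrow> 'a"
  assumes disj: "\<And>B1 B2. B1 \<in> W \<Longrightarrow> B2 \<in> W \<Longrightarrow> B1 \<noteq> B2 \<Longrightarrow> B1 \<inter> B2 = {}"
    and ET_sub: "\<And>B. B \<in> W \<Longrightarrow> ET B \<subseteq> E"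
    and ET_in: "\<And>B a. B \<in> W \<Longrightarrow> a \<in> ET B \<Longrightarrow> a \<subseteq> B"
    and rt_in: "\<And>B. B \<in> W \<Longrightarrow> rt B \<in> B"
    and rw: "\<And>B v. B \<in> W \<Longrightarrow> v \<in> B \<Longrightarrow>
       rw B v \<noteq> [] \<and> hd (rw B v) = rt B \<and> last (rw B v) = v \<and> wedges (rw B v) \<subseteq> ET B"
    and att_in: "\<And>e B. e \<in> F \<Longrightarrow> B \<in> e \<Longrightarrow> att e B \<in> B"
    and ge: "\<And>e B1 B2. e \<in> F \<Longrightarrow> e = {B1, B2} \<Longrightarrow> B1 \<noteq> B2 \<Longrightarrow> B1 \<in> W \<Longrightarrow> B2 \<in> W \<Longrightarrow>
       ge e = {att e B1, att e B2}"
    and geE: "\<And>e. e \<in> F \<Longrightarrow> ge e \<in> E"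
    and col: "\<And>e B. e \<in> F \<Longrightarrow> B \<in> e \<Longrightarrow> c ` wedges (rw B (att e B)) \<subseteq> S"
    and colg: "\<And>e. e \<in> F \<Longrightarrow> c (ge e) \<in> S"
begin

definition good :: "'a set \<Rightarrow> 'a \<Rightarrow> bool" where
  "good B u \<longleftrightarrow> u \<in> B \<and> c ` wedges (rw B u) \<subseteq> S"

lemma good_att: "e \<in> F \<Longrightarrow> B \<in> e \<Longrightarrow> good B (att e B)"
  using att_in col by (simp add: good_def)

lemma rw_set: assumes "B \<in> W" "v \<in> B" shows "set (rw B v) \<subseteq> B"
proof -
  have r: "rw B v \<noteq> []" "hd (rw B v) = rt B" "wedges (rw B v) \<subseteq> ET B" using rw[OF assms] by auto
  have "set (rw B v) \<subseteq> insert (hd (rw B v)) (\<Union> (wedges (rw B v)))" by (rule set_wedges[OF r(1)])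
  also have "\<dots> \<subseteq> B"
  proof -
    have "\<Union> (wedges (rw B v)) \<subseteq> B" using r(3) ET_in[OF assms(1)] by blast
    then show ?thesis using r(2) rt_in[OF assms(1)] by simp
  qed
  finally show ?thesis .
qed

lemma connect:
  assumes B: "B \<in> W" and gu: "good B u" and gv: "good B v"
  shows "\<exists>Q. Q \<noteq> [] \<and> distinct Q \<and> hd Q = u \<and> last Q = v \<and> set Q \<subseteq> B \<and> wedges Q \<subseteq> E
     \<and> c ` wedges Q \<subseteq> S"
proof -
  have uB: "u \<in> B" and vB: "v \<in> B" using gu gv by (auto simp: good_def)
  note ru = rw[OF B uB] and rv = rw[OF B vB]
  let ?w = "rev (rw B u) @ tl (rw B v)"
  have we: "wedges ?w \<subseteq> wedges (rw B u) \<union> wedges (rw B v)"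
    using wedges_app_tl[of "rev (rw B u)" "rw B v"] ru rv by (simp add: last_rev wedges_rev)
  have wne: "?w \<noteq> []" using ru by simp
  have whd: "hd ?w = u" using ru by (simp add: hd_rev)
  have wlast: "last ?w = v"
  proof (cases "tl (rw B v) = []")
    case True
    then have "rw B v = [hd (rw B v)]" using rv by (metis list.collapse)
    then have "v = rt B" using rv by (metis last_ConsL)
    then show ?thesis using True ru by (simp add: last_rev)
  next
    case False
    then show ?thesis using rv by (simp add: last_tl)
  qed
  have "set (tl (rw B v)) \<subseteq> set (rw B v)" by (cases "rw B v") auto
  then have wset: "set ?w \<subseteq> B" using rw_set[OF B uB] rw_set[OF B vB] by auto
  obtain Q where Q: "Q \<noteq> []" "distinct Q" "hd Q = hd ?w" "last Q = last ?w"
    "wedges Q \<subseteq> wedges ?w" "set Q \<subseteq> set ?w"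
    using shorten[OF wne] by blast
  have "wedges Q \<subseteq> E" using Q(5) we ru rv ET_sub[OF B] by blast
  moreover have "c ` wedges Q \<subseteq> S" using Q(5) we gu gv unfolding good_def by blast
  ultimately show ?thesis using Q whd wlast wset by (intro exI[of _ Q]) auto
qed

lemma pathlift:
  "qs \<noteq> [] \<Longrightarrow> distinct qs \<Longrightarrow> set qs \<subseteq> W \<Longrightarrow> wedges qs \<subseteq> F \<Longrightarrow> good (hd qs) u \<Longrightarrow> good (last qs) v \<Longrightarrow>
   \<exists>vs. vs \<noteq> [] \<and> distinct vs \<and> hd vs = u \<and> last vs = v \<and> set vs \<subseteq> \<Union> (set qs) \<and> wedges vs \<subseteq> E
     \<and> c ` wedges vs \<subseteq> S \<and> length qs \<le> length vs"
proof (induction qs arbitrary: u)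
  case Nil then show ?case by simp
next
  case (Cons B qs)
  show ?case
  proof (cases "qs = []")
    case True
    then have "B \<in> W" "good B u" "good B v" using Cons.prems by auto
    then obtain Q where "Q \<noteq> [] \<and> distinct Q \<and> hd Q = u \<and> last Q = v \<and> set Q \<subseteq> B \<and> wedges Q \<subseteq> E
     \<and> c ` wedges Q \<subseteq> S" using connect by blast
    then show ?thesis using True by (intro exI[of _ Q]) (auto simp: Suc_le_eq)
  next
    case False
    define B' where "B' = hd qs"
    define e where "e = {B, B'}"
    have BW: "B \<in> W" and B'W: "B' \<in> W" using Cons.prems False by (auto simp: B'_def)
    have BB': "B \<noteq> B'" using Cons.prems(2) False by (auto simp: B'_def)
    have eF: "e \<in> F" using Cons.prems(4) wedges_Cons[OF False, of B] by (simp add: e_def B'_def)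
    define x where "x = att e B"
    define y where "y = att e B'"
    have gx: "good B x" using good_att[OF eF] by (simp add: x_def e_def)
    have gy: "good B' y" using good_att[OF eF] by (simp add: y_def e_def)
    have gexy: "ge e = {x, y}" using ge[OF eF e_def BB' BW B'W] by (simp add: x_def y_def)
    have gu: "good B u" using Cons.prems(5) by simp
    obtain Q where Q: "Q \<noteq> []" "distinct Q" "hd Q = u" "last Q = x" "set Q \<subseteq> B" "wedges Q \<subseteq> E"
      "c ` wedges Q \<subseteq> S" using connect[OF BW gu gx] by blast
    have p: "distinct qs" "set qs \<subseteq> W" "wedges qs \<subseteq> F" "good (hd qs) y" "good (last qs) v"
      using Cons.prems False gy wedges_Cons[OF False, of B] by (auto simp: B'_def)
    obtain vs where vs: "vs \<noteq> []" "distinct vs" "hd vs = y" "last vs = v" "set vs \<subseteq> \<Union> (set qs)"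
      "wedges vs \<subseteq> E" "c ` wedges vs \<subseteq> S" "length qs \<le> length vs"
      using Cons.IH[OF False p] by blast
    have disjQ: "set Q \<inter> set vs = {}"
    proof -
      have "B \<inter> \<Union> (set qs) = {}" using disj BW p(2) Cons.prems(2) by fastforce
      then show ?thesis using Q(5) vs(5) by blast
    qed
    let ?r = "Q @ vs"
    have "wedges ?r = wedges Q \<union> wedges vs \<union> {{x, y}}"
      using wedges_append[of Q vs] Q vs by simp
    moreover have "{x, y} \<in> E" "c {x, y} \<in> S" using geE[OF eF] colg[OF eF] gexy by auto
    ultimately have "wedges ?r \<subseteq> E" "c ` wedges ?r \<subseteq> S" using Q vs by auto
    moreover have "?r \<noteq> []" "distinct ?r" "hd ?r = u" "last ?r = v" "set ?r \<subseteq> \<Union> (set (B # qs))"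
      using Q vs disjQ by auto
    moreover have "length (B # qs) \<le> length ?r" using Q(1) vs(8) by (cases Q) auto
    ultimately show ?thesis by blast
  qed
qed

lemma cyclelift:
  assumes "distinct qs" "set qs \<subseteq> W" "3 \<le> length qs" "wedges qs \<subseteq> F" "{last qs, hd qs} \<in> F"
  shows "\<exists>vs. is_cycle E vs \<and> length qs \<le> length vs \<and> c ` cycle_edges vs \<subseteq> S"
proof -
  define e0 where "e0 = {last qs, hd qs}"
  have ne: "qs \<noteq> []" using assms(3) by auto
  have lh: "last qs \<noteq> hd qs"
  proof -
    have "last qs = qs ! (length qs - 1)" "hd qs = qs ! 0" using ne by (auto simp: last_conv_nth hd_conv_nth)
    moreover have "qs ! (length qs - 1) \<noteq> qs ! 0"
      using assms(1,3) ne nth_eq_iff_index_eq[of qs "length qs - 1" 0] by simp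
    ultimately show ?thesis by simp
  qed
  have W2: "last qs \<in> W" "hd qs \<in> W" using assms(2) ne by auto
  have e0F: "e0 \<in> F" using assms(5) by (simp add: e0_def)
  define u where "u = att e0 (hd qs)"
  define v where "v = att e0 (last qs)"
  have gu: "good (hd qs) u" using good_att[OF e0F] by (simp add: u_def e0_def)
  have gv: "good (last qs) v" using good_att[OF e0F] by (simp add: v_def e0_def)
  obtain vs where vs: "vs \<noteq> []" "distinct vs" "hd vs = u" "last vs = v" "wedges vs \<subseteq> E"
     "c ` wedges vs \<subseteq> S" "length qs \<le> length vs"
    using pathlift[OF ne assms(1,2,4) gu gv] by blast
  have g0: "ge e0 = {v, u}" using ge[OF e0F e0_def lh W2] by (simp add: u_def v_def)
  have ce: "cycle_edges vs = insert {v, u} (wedges vs)" using cycle_edges_eq[OF vs(1)] vs by simp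
  have "{v, u} \<in> E" "c {v, u} \<in> S" using geE[OF e0F] colg[OF e0F] g0 by auto
  then have "cycle_edges vs \<subseteq> E" "c ` cycle_edges vs \<subseteq> S" using ce vs by auto
  moreover have "3 \<le> length vs" using vs assms(3) by simp
  ultimately show ?thesis using vs is_cycle_iff by blast
qed

end



lemma ext_card:
  assumes "finite C" "A \<subseteq> C" "card A \<le> k" "k \<le> card C"
  shows "\<exists>S. A \<subseteq> S \<and> S \<subseteq> C \<and> card S = k"
proof -
  have fA: "finite A" using assms(1,2) finite_subset by blast
  have "card (C - A) = card C - card A" using assms(1,2) fA by (simp add: card_Diff_subset)
  then have "k - card A \<le> card (C - A)" using assms(4) by simp
  then obtain T where T: "T \<subseteq> C - A" "card T = k - card A" "finite T"
    by (rule obtain_subset_with_card_n)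
  have "card (A \<union> T) = card A + card T" using T fA by (subst card_Un_disjoint) auto
  then have "card (A \<union> T) = k" using T(2) assms(3) by simp
  then show ?thesis using T(1) assms(2) by (intro exI[of _ "A \<union> T"]) auto
qed

lemma mod_succ: assumes "a < (L::nat)" shows "(a + 1) mod L = (if a + 1 < L then a + 1 else 0)"
proof (cases "a + 1 < L")
  case True then show ?thesis by simp
next
  case False then have "a + 1 = L" using assms by simp
  then show ?thesis by simp
qed

lemma cycle_edges_card:
  assumes "is_cycle E vs"
  shows "card (cycle_edges vs) = length vs"
proof -
  define L where "L = length vs"
  define h where "h i = {vs ! i, vs ! ((i + 1) mod L)}" for i
  have L3: "3 \<le> L" and d: "distinct vs" using assms by (auto simp: is_cycle_def L_def)
  have ce: "cycle_edges vs = h ` {..<L}" unfolding cycle_edges_def h_def L_def by auto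
  have inj: "inj_on h {..<L}"
  proof (rule inj_onI)
    fix i j assume i: "i \<in> {..<L}" and j: "j \<in> {..<L}" and hij: "h i = h j"
    have mi: "(i + 1) mod L < L" and mj: "(j + 1) mod L < L" using L3 by auto
    have "vs ! i = vs ! j \<or> vs ! i = vs ! ((j + 1) mod L)"
      using hij unfolding h_def doubleton_eq_iff by blast
    then have a: "i = j \<or> i = (j + 1) mod L"
      using d i j mj nth_eq_iff_index_eq[of vs i j] nth_eq_iff_index_eq[of vs i "(j + 1) mod L"]
      by (auto simp: L_def)
    have "vs ! j = vs ! i \<or> vs ! j = vs ! ((i + 1) mod L)"
      using hij unfolding h_def doubleton_eq_iff by metis
    then have b: "j = i \<or> j = (i + 1) mod L"
      using d i j mi nth_eq_iff_index_eq[of vs j i] nth_eq_iff_index_eq[of vs j "(i + 1) mod L"]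
      by (auto simp: L_def)
    show "i = j"
      using a b mod_succ[of i L] mod_succ[of j L] i j L3 by (auto split: if_splits)
  qed
  show ?thesis using ce inj card_image by (fastforce simp: L_def)
qed

lemma good_exists:
  assumes G: "simple_graph V E" and fle: "\<forall>x. f x \<le> x"
  shows "\<exists>c. good_colouring f E p c"
proof -
  have "E \<subseteq> Pow V" using G by (auto simp: simple_graph_def)
  then have finE: "finite E" using G by (auto simp: simple_graph_def intro: finite_subset)
  obtain h :: "'a set \<Rightarrow> nat" and n where h: "h ` E = {i. i < n}" "inj_on h E"
    using finite_imp_inj_to_nat_seg[OF finE] by blast
  have "good_colouring f E p h"
    unfolding good_colouring_def
  proof (intro allI impI)
    fix vs assume cy: "is_cycle E vs"
    have sub: "cycle_edges vs \<subseteq> E" using cy by (simp add: is_cycle_iff)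
    have "card (h ` cycle_edges vs) = card (cycle_edges vs)"
      using inj_on_subset[OF h(2) sub] by (simp add: card_image)
    also have "\<dots> = length vs" using cycle_edges_card[OF cy] .
    finally show "min (f (length vs)) (p + 1) \<le> card (h ` cycle_edges vs)"
      using fle by (metis min.coboundedI1)
  qed
  then show ?thesis by blast
qed



lemma minor_bound:
  fixes V :: "'a set" and E :: "'a set set" and c :: "'a set \<Rightarrow> nat"
  assumes G: "simple_graph V E"
    and N: "card (c ` E) = N"
    and cyc: "\<And>vs. is_cycle E vs \<Longrightarrow> card (c ` cycle_edges vs) \<le> p \<Longrightarrow> length vs \<le> gg"
    and p: "p = 2 * r + 1" and gg1: "1 \<le> gg"
    and sm: "shallow_minor V E r W F"
  shows "card F \<le> N ^ p * gg * card W"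
proof -
  have EP: "E \<subseteq> Pow V" using G by (auto simp: simple_graph_def)
  have finV: "finite V" using G by (simp add: simple_graph_def)
  have finE: "finite E" using EP finV by (meson finite_Pow_iff finite_subset)
  have T: "\<And>B. B \<in> W \<Longrightarrow> shallow_tree V E r B" using sm by (simp add: shallow_minor_def)
  have D: "\<And>B1 B2. B1 \<in> W \<Longrightarrow> B2 \<in> W \<Longrightarrow> B1 \<noteq> B2 \<Longrightarrow> B1 \<inter> B2 = {}"
    using sm by (simp add: shallow_minor_def)
  have FE: "\<And>e. e \<in> F \<Longrightarrow> \<exists>B1 B2. e = {B1, B2} \<and> B1 \<in> W \<and> B2 \<in> W \<and> B1 \<noteq> B2 \<and>
        (\<exists>x\<in>B1. \<exists>y\<in>B2. {x, y} \<in> E)"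
    using sm by (simp add: shallow_minor_def)
  have WV: "W \<subseteq> Pow V"
  proof
    fix B assume "B \<in> W"
    then have "B \<subseteq> V" using T[of B] unfolding shallow_tree_def by blast
    then show "B \<in> Pow V" by simp
  qed
  have finW: "finite W" using WV finV by (meson finite_Pow_iff finite_subset)
  have ex: "\<forall>B\<in>W. \<exists>ETr. ETr \<subseteq> E \<and> is_tree B ETr \<and> (\<exists>rt. rt \<in> B \<and>
     (\<forall>v\<in>B. \<exists>vs. walk ETr vs \<and> hd vs = rt \<and> last vs = v \<and> length vs \<le> r + 1))"
  proof
    fix B assume B: "B \<in> W"
    have "shallow_tree V E r B" using T[OF B] .
    then obtain ETr root where h: "ETr \<subseteq> E" "is_tree B ETr" "root \<in> B"
      "\<forall>v\<in>B. \<exists>vs. walk ETr vs \<and> hd vs = root \<and> last vs = v \<and> length vs \<le> r + 1"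
      unfolding shallow_tree_def by blast
    show "\<exists>ETr. ETr \<subseteq> E \<and> is_tree B ETr \<and> (\<exists>rt. rt \<in> B \<and>
     (\<forall>v\<in>B. \<exists>vs. walk ETr vs \<and> hd vs = rt \<and> last vs = v \<and> length vs \<le> r + 1))"
      using h by blast
  qed
  obtain ET where ET: "\<forall>B\<in>W. ET B \<subseteq> E \<and> is_tree B (ET B) \<and> (\<exists>rt. rt \<in> B \<and>
     (\<forall>v\<in>B. \<exists>vs. walk (ET B) vs \<and> hd vs = rt \<and> last vs = v \<and> length vs \<le> r + 1))"
    using bchoice[OF ex] by blast
  then obtain rt where RT: "\<forall>B\<in>W. rt B \<in> B \<and>
     (\<forall>v\<in>B. \<exists>vs. walk (ET B) vs \<and> hd vs = rt B \<and> last vs = v \<and> length vs \<le> r + 1)"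
    using bchoice[of W "\<lambda>B rt. rt \<in> B \<and>
     (\<forall>v\<in>B. \<exists>vs. walk (ET B) vs \<and> hd vs = rt \<and> last vs = v \<and> length vs \<le> r + 1)"] by blast
  define rw where "rw B v = (SOME vs. walk (ET B) vs \<and> hd vs = rt B \<and> last vs = v \<and> length vs \<le> r + 1)"
    for B v
  have rwP: "walk (ET B) (rw B v) \<and> hd (rw B v) = rt B \<and> last (rw B v) = v \<and> length (rw B v) \<le> r + 1"
    if "B \<in> W" "v \<in> B" for B v
    unfolding rw_def by (rule someI_ex) (use RT that in blast)
  have ET_sub: "ET B \<subseteq> E" if "B \<in> W" for B using ET that by blast
  have ET_in: "a \<subseteq> B" if "B \<in> W" "a \<in> ET B" for B a
    using ET that by (auto simp: is_tree_def simple_graph_def)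
  define xy where "xy e = (SOME q. \<exists>B1 B2. e = {B1, B2} \<and> B1 \<in> W \<and> B2 \<in> W \<and> B1 \<noteq> B2 \<and>
        fst q \<in> B1 \<and> snd q \<in> B2 \<and> {fst q, snd q} \<in> E)" for e
  define ge where "ge e = {fst (xy e), snd (xy e)}" for e
  define att where "att e B = (if fst (xy e) \<in> B then fst (xy e) else snd (xy e))" for e B
  have xyP: "\<exists>B1 B2. e = {B1, B2} \<and> B1 \<in> W \<and> B2 \<in> W \<and> B1 \<noteq> B2 \<and>
        fst (xy e) \<in> B1 \<and> snd (xy e) \<in> B2 \<and> ge e \<in> E" if eF: "e \<in> F" for e
  proof -
    obtain B1 B2 x y where "e = {B1, B2}" "B1 \<in> W" "B2 \<in> W" "B1 \<noteq> B2" "x \<in> B1" "y \<in> B2" "{x, y} \<in> E"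
      using FE[OF eF] by blast
    then have "\<exists>q. \<exists>B1 B2. e = {B1, B2} \<and> B1 \<in> W \<and> B2 \<in> W \<and> B1 \<noteq> B2 \<and>
        fst q \<in> B1 \<and> snd q \<in> B2 \<and> {fst q, snd q} \<in> E" by (intro exI[of _ "(x, y)"]) auto
    then have "\<exists>B1 B2. e = {B1, B2} \<and> B1 \<in> W \<and> B2 \<in> W \<and> B1 \<noteq> B2 \<and>
        fst (xy e) \<in> B1 \<and> snd (xy e) \<in> B2 \<and> {fst (xy e), snd (xy e)} \<in> E"
      unfolding xy_def by (rule someI_ex)
    then show ?thesis by (simp add: ge_def)
  qed
  have geE: "ge e \<in> E" if "e \<in> F" for e using xyP[OF that] by blast
  have att_in: "att e B \<in> B" if eF: "e \<in> F" and Be: "B \<in> e" for e B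
  proof -
    obtain B1 B2 where b: "e = {B1, B2}" "B1 \<in> W" "B2 \<in> W" "B1 \<noteq> B2"
        "fst (xy e) \<in> B1" "snd (xy e) \<in> B2" using xyP[OF eF] by blast
    have "fst (xy e) \<notin> B2" using D[OF b(2,3,4)] b(5) by blast
    then show ?thesis using Be b by (auto simp: att_def)
  qed
  have ge_att: "ge e = {att e C1, att e C2}"
    if eF: "e \<in> F" and eC: "e = {C1, C2}" and "C1 \<noteq> C2" for e C1 C2
  proof -
    obtain B1 B2 where b: "e = {B1, B2}" "B1 \<in> W" "B2 \<in> W" "B1 \<noteq> B2"
        "fst (xy e) \<in> B1" "snd (xy e) \<in> B2" using xyP[OF eF] by blast
    have n2: "fst (xy e) \<notin> B2" using D[OF b(2,3,4)] b(5) by blast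
    have a1: "att e B1 = fst (xy e)" and a2: "att e B2 = snd (xy e)" using b(5) n2 by (auto simp: att_def)
    have "(C1 = B1 \<and> C2 = B2) \<or> (C1 = B2 \<and> C2 = B1)" using eC b(1) by (metis doubleton_eq_iff)
    then show ?thesis using a1 a2 by (auto simp: ge_def)
  qed
  define le where "le e = insert (ge e) (\<Union>B\<in>e. wedges (rw B (att e B)))" for e
  define C where "C = c ` E"
  define k where "k = min p N"
  have finC: "finite C" using finE by (simp add: C_def)
  have cardC: "card C = N" using N by (simp add: C_def)
  have le_E: "le e \<subseteq> E" if "e \<in> F" for e
  proof -
    have "wedges (rw B (att e B)) \<subseteq> E" if "B \<in> e" for B
    proof -
      obtain B1 B2 where "e = {B1, B2}" "B1 \<in> W" "B2 \<in> W" using FE[OF \<open>e \<in> F\<close>] by blast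
      then have BW: "B \<in> W" using that by auto
      have "wedges (rw B (att e B)) \<subseteq> ET B"
        using rwP[OF BW att_in[OF \<open>e \<in> F\<close> that]] by (simp add: walk_iff)
      then show ?thesis using ET_sub[OF BW] by blast
    qed
    then show ?thesis using geE[OF that] by (auto simp: le_def)
  qed
  have le_card: "card (le e) \<le> p" if eF: "e \<in> F" for e
  proof -
    obtain B1 B2 where b: "e = {B1, B2}" "B1 \<in> W" "B2 \<in> W" "B1 \<noteq> B2" using FE[OF eF] by blast
    have w: "card (wedges (rw B (att e B))) \<le> r" if "B \<in> e" for B
    proof -
      have BW: "B \<in> W" using that b by auto
      have "length (rw B (att e B)) \<le> r + 1" using rwP[OF BW att_in[OF \<open>e \<in> F\<close> that]] by simp
      then show ?thesis using wedges_card[of "rw B (att e B)"] by simp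
    qed
    have "le e = insert (ge e) (wedges (rw B1 (att e B1)) \<union> wedges (rw B2 (att e B2)))"
      using b(1) by (simp add: le_def)
    then have "card (le e) \<le> Suc (card (wedges (rw B1 (att e B1)) \<union> wedges (rw B2 (att e B2))))"
      by (simp add: card_insert_le_m1 card_insert_if wedges_finite)
    also have "\<dots> \<le> Suc (card (wedges (rw B1 (att e B1))) + card (wedges (rw B2 (att e B2))))"
      using card_Un_le by simp
    also have "\<dots> \<le> Suc (r + r)" using w[of B1] w[of B2] b(1) by simp
    finally show ?thesis using p by simp
  qed
  define col where "col e = c ` le e" for e
  have col_C: "col e \<subseteq> C" if "e \<in> F" for e using le_E[OF that] by (auto simp: col_def C_def)
  have col_card: "card (col e) \<le> k" if "e \<in> F" for e
  proof -
    have "card (col e) \<le> card (le e)" unfolding col_def by (rule card_image_le)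
      (use le_E[OF that] finE in \<open>blast intro: finite_subset\<close>)
    moreover have "card (col e) \<le> card C" using card_mono[OF finC col_C[OF that]] .
    ultimately show ?thesis using le_card[OF that] cardC by (simp add: k_def)
  qed
  have kC: "k \<le> card C" using cardC by (simp add: k_def)
  define cls where "cls e = (SOME S. col e \<subseteq> S \<and> S \<subseteq> C \<and> card S = k)" for e
  have clsP: "col e \<subseteq> cls e \<and> cls e \<subseteq> C \<and> card (cls e) = k" if "e \<in> F" for e
    unfolding cls_def by (rule someI_ex) (rule ext_card[OF finC col_C[OF that] col_card[OF that] kC])
  define Ksub where "Ksub = {S. S \<subseteq> C \<and> card S = k}"
  have clsK: "cls ` F \<subseteq> Ksub" using clsP by (auto simp: Ksub_def)
  define FS where "FS S = {e \<in> F. cls e = S}" for S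
  have FSe: "\<exists>a b. e = {a, b} \<and> a \<in> W \<and> b \<in> W \<and> a \<noteq> b" if eFS: "e \<in> FS S" for e S
    proof -
      have eF: "e \<in> F" using eFS by (simp add: FS_def)
      obtain B1 B2 where "e = {B1, B2}" "B1 \<in> W" "B2 \<in> W" "B1 \<noteq> B2" using FE[OF eF] by blast
      then show ?thesis by blast
    qed
  have FS_bound: "card (FS S) \<le> gg * card W" if SK: "S \<in> Ksub" for S
  proof (rule degen[OF finW])
    show "\<exists>a b. e = {a, b} \<and> a \<in> W \<and> b \<in> W \<and> a \<noteq> b" if "e \<in> FS S" for e
      using FSe[OF that] .
  next
    fix U assume UW: "U \<subseteq> W" and Une: "U \<noteq> {}"
    show "\<exists>B\<in>U. card {B' \<in> U. {B, B'} \<in> FS S} \<le> gg"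
    proof (rule ccontr)
      assume "\<not> ?thesis"
      then have deg: "\<And>B. B \<in> U \<Longrightarrow> gg < card {B' \<in> U. {B, B'} \<in> FS S}" by (meson not_le)
      have finU: "finite U" using UW finW finite_subset by blast
      obtain qs where qs: "qs \<noteq> []" "distinct qs" "set qs \<subseteq> U" "gg + 2 \<le> length qs"
        "wedges qs \<subseteq> FS S" "{last qs, hd qs} \<in> FS S"
      proof -
        have Fe2: "\<exists>a b. e = {a, b} \<and> a \<noteq> b" if "e \<in> FS S" for e using FSe[OF that] by blast
        show ?thesis using long_cycle[OF finU Une Fe2 deg] that by blast
      qed
      have ctx: "liftctx E W (FS S) c S ET rt rw ge att"
      proof unfold_locales
        show "\<And>B1 B2. B1 \<in> W \<Longrightarrow> B2 \<in> W \<Longrightarrow> B1 \<noteq> B2 \<Longrightarrow> B1 \<inter> B2 = {}" by (rule D)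
        show "\<And>B. B \<in> W \<Longrightarrow> ET B \<subseteq> E" by (rule ET_sub)
        show "\<And>B a. B \<in> W \<Longrightarrow> a \<in> ET B \<Longrightarrow> a \<subseteq> B" by (rule ET_in)
        show "\<And>B. B \<in> W \<Longrightarrow> rt B \<in> B" using RT by blast
        show "\<And>B v. B \<in> W \<Longrightarrow> v \<in> B \<Longrightarrow>
          rw B v \<noteq> [] \<and> hd (rw B v) = rt B \<and> last (rw B v) = v \<and> wedges (rw B v) \<subseteq> ET B"
          using rwP by (simp add: walk_iff)
        show "\<And>e B. e \<in> FS S \<Longrightarrow> B \<in> e \<Longrightarrow> att e B \<in> B" using att_in by (auto simp: FS_def)
        show "\<And>e B1 B2. e \<in> FS S \<Longrightarrow> e = {B1, B2} \<Longrightarrow> B1 \<noteq> B2 \<Longrightarrow> B1 \<in> W \<Longrightarrow> B2 \<in> W \<Longrightarrow>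
          ge e = {att e B1, att e B2}" using ge_att by (auto simp: FS_def)
        show "\<And>e. e \<in> FS S \<Longrightarrow> ge e \<in> E" using geE by (auto simp: FS_def)
        show "\<And>e B. e \<in> FS S \<Longrightarrow> B \<in> e \<Longrightarrow> c ` wedges (rw B (att e B)) \<subseteq> S"
        proof -
          fix e B assume eS: "e \<in> FS S" and Be: "B \<in> e"
          have eF: "e \<in> F" and Se: "cls e = S" using eS by (auto simp: FS_def)
          have "c ` wedges (rw B (att e B)) \<subseteq> col e" using Be unfolding col_def le_def by blast
          then show "c ` wedges (rw B (att e B)) \<subseteq> S" using clsP[OF eF] Se by blast
        qed
        show "\<And>e. e \<in> FS S \<Longrightarrow> c (ge e) \<in> S"
          using clsP by (auto simp: FS_def col_def le_def)
      qed
      obtain vs where vs: "is_cycle E vs" "length qs \<le> length vs" "c ` cycle_edges vs \<subseteq> S"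
        using liftctx.cyclelift[OF ctx qs(2) _ _ qs(5,6)] qs(3,4) UW gg1 by auto
      have "card (c ` cycle_edges vs) \<le> card S"
        using vs(3) SK finC by (intro card_mono) (auto simp: Ksub_def intro: finite_subset)
      also have "card S = k" using SK by (simp add: Ksub_def)
      also have "k \<le> p" by (simp add: k_def)
      finally have "length vs \<le> gg" using cyc[OF vs(1)] by simp
      then show False using vs(2) qs(4) by simp
    qed
  qed
  show ?thesis
  proof (cases "F = {}")
    case True then show ?thesis by simp
  next
    case False
    then obtain e0 where "e0 \<in> F" by blast
    then have "E \<noteq> {}" using geE by blast
    then have "c ` E \<noteq> {}" by blast
    then have "0 < card (c ` E)" using finE by (simp add: card_gt_0_iff)
    then have N1: "1 \<le> N" using N by simp
    have "F \<subseteq> Pow W" using FE by blast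
    then have finF: "finite F" using finW by (meson finite_Pow_iff finite_subset)
    have "F = (\<Union>S\<in>cls ` F. FS S)" by (auto simp: FS_def)
    then have "card F \<le> (\<Sum>S\<in>cls ` F. card (FS S))" by (metis card_UN_le finite_imageI finF)
    also have "\<dots> \<le> (\<Sum>S\<in>cls ` F. gg * card W)" using FS_bound clsK by (intro sum_mono) auto
    also have "\<dots> = card (cls ` F) * (gg * card W)" by simp
    finally have c1: "card F \<le> card (cls ` F) * (gg * card W)" .
    have finK: "finite Ksub" using finC by (auto simp: Ksub_def)
    have "card (cls ` F) \<le> card Ksub" using card_mono[OF finK clsK] .
    also have "card Ksub = N choose k" unfolding Ksub_def using n_subsets[OF finC, of k] cardC by simp
    also have "\<dots> \<le> N ^ k" by (rule binomial_le_pow) (simp add: k_def)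
    also have "\<dots> \<le> N ^ p" using N1 by (intro power_increasing) (auto simp: k_def)
    finally have "card (cls ` F) \<le> N ^ p" .
    then have "card (cls ` F) * (gg * card W) \<le> N ^ p * (gg * card W)" by (rule mult_right_mono) simp
    then have "card F \<le> N ^ p * (gg * card W)" using c1 by (rule le_trans[rotated])
    then show ?thesis by (simp add: mult.assoc)
  qed
qed



lemma minor_sub:
  assumes "shallow_minor V E r W F"
  shows "W \<subseteq> Pow V \<and> F \<subseteq> Pow (Pow V)"
proof -
  have WV: "W \<subseteq> Pow V"
  proof
    fix B assume "B \<in> W"
    then have "shallow_tree V E r B" using assms by (simp add: shallow_minor_def)
    then have "B \<subseteq> V" unfolding shallow_tree_def by blast
    then show "B \<in> Pow V" by simp
  qed
  moreover have "F \<subseteq> Pow (Pow V)"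
  proof
    fix e assume eF: "e \<in> F"
    have "\<forall>e\<in>F. \<exists>B1 B2. e = {B1, B2} \<and> B1 \<in> W \<and> B2 \<in> W \<and> B1 \<noteq> B2 \<and> (\<exists>x\<in>B1. \<exists>y\<in>B2. {x, y} \<in> E)"
      using assms by (simp add: shallow_minor_def)
    from bspec[OF this eF] obtain B1 B2
      where h2: "e = {B1, B2} \<and> B1 \<in> W \<and> B2 \<in> W \<and> B1 \<noteq> B2 \<and> (\<exists>x\<in>B1. \<exists>y\<in>B2. {x, y} \<in> E)"
      by (elim exE)
    then have "e = {B1, B2}" "B1 \<in> W" "B2 \<in> W" by simp_all
    then show "e \<in> Pow (Pow V)" using WV by auto
  qed
  ultimately show ?thesis by blast
qed

theorem mainTheorem3:
  fixes f :: "nat \<Rightarrow> nat" and g :: "nat \<Rightarrow> nat"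
    and V :: "'a set" and E :: "'a set set" and r :: nat
  assumes f_mono: "mono f"
    and f_unbounded: "\<forall>m. \<exists>x. m \<le> f x"
    and f_le: "\<forall>x. f x \<le> x"
    and g_def: "\<forall>p. g p = Max {i. f i \<le> p}"
    and G: "simple_graph V E"
  shows "nabla V E r \<le> real (Nf f V E (2 * r + 1)) ^ (2 * r + 1) * real (g (2 * r + 1)) ^ 2"
proof -
  define p where "p = 2 * r + 1"
  define gg where "gg = g p"
  have finf: "finite {i. f i \<le> q}" for q
  proof -
    obtain x where x: "Suc q \<le> f x" using f_unbounded by blast
    have "{i. f i \<le> q} \<subseteq> {..<x}"
    proof
      fix i assume "i \<in> {i. f i \<le> q}"
      then have fi: "f i \<le> q" by simp
      show "i \<in> {..<x}"
      proof (rule ccontr)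
        assume "i \<notin> {..<x}" then have "x \<le> i" by simp
        then have "f x \<le> f i" using f_mono by (simp add: mono_def)
        then show False using fi x by simp
      qed
    qed
    then show ?thesis using finite_subset by blast
  qed
  have gg_eq: "gg = Max {i. f i \<le> p}" using g_def by (simp add: gg_def)
  have "p \<in> {i. f i \<le> p}" using f_le by simp
  then have ppos: "p \<le> gg" using Max_ge[OF finf] gg_eq by simp
  then have gg1: "1 \<le> gg" using p_def by simp
  obtain c1 where "good_colouring f E p c1" using good_exists[OF G f_le] by blast
  then have "\<exists>k. \<exists>c. good_colouring f E p c \<and> card (c ` E) = k" by blast
  then have "\<exists>c. good_colouring f E p c \<and> card (c ` E) = Nf f V E p"
    unfolding Nf_def by (rule LeastI_ex)
  then obtain c0 where gc: "good_colouring f E p c0" and cN: "card (c0 ` E) = Nf f V E p" by blast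
  have cyc: "length vs \<le> gg" if cy: "is_cycle E vs" and cp: "card (c0 ` cycle_edges vs) \<le> p" for vs
  proof -
    have "min (f (length vs)) (p + 1) \<le> card (c0 ` cycle_edges vs)"
      using gc cy by (simp add: good_colouring_def)
    then have "f (length vs) \<le> p" using cp by simp
    then show ?thesis using Max_ge[OF finf, of "length vs" p] gg_eq by simp
  qed
  define N where "N = Nf f V E p"
  have bound: "real (card F) / real (card W) \<le> real N ^ p * real gg ^ 2"
    if sm: "shallow_minor V E r W F" for W F
  proof -
    have cF: "card F \<le> N ^ p * gg * card W"
      using minor_bound[OF G cN[folded N_def] cyc p_def gg1 sm] by blast
    show ?thesis
    proof (cases "card W = 0")
      case True then show ?thesis by simp
    next
      case False
      then have W0: "0 < real (card W)" by simp
      have "real (card F) \<le> real N ^ p * real gg * real (card W)"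
        using cF by (metis of_nat_le_iff of_nat_mult of_nat_power)
      then have "real (card F) / real (card W) \<le> real N ^ p * real gg"
        using W0 by (simp add: divide_le_eq)
      also have "\<dots> \<le> real N ^ p * real gg ^ 2"
        using gg1 by (intro mult_left_mono) (auto simp: power2_eq_square)
      finally show ?thesis .
    qed
  qed
  define A where "A = {real (card F) / real (card W) | W F. shallow_minor V E r W F}"
  have "A \<subseteq> (\<lambda>(W, F). real (card F) / real (card W)) ` (Pow (Pow V) \<times> Pow (Pow (Pow V)))"
  proof
    fix a assume "a \<in> A"
    then obtain W F where a: "a = real (card F) / real (card W)" "shallow_minor V E r W F"
      by (auto simp: A_def)
    then have "(W, F) \<in> Pow (Pow V) \<times> Pow (Pow (Pow V))" using minor_sub by blast
    then show "a \<in> (\<lambda>(W, F). real (card F) / real (card W)) ` (Pow (Pow V) \<times> Pow (Pow (Pow V)))"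
      using a(1) by force
  qed
  moreover have "finite V" using G by (simp add: simple_graph_def)
  ultimately have finA: "finite A" by (meson finite_Pow_iff finite_SigmaI finite_imageI finite_subset)
  have "shallow_minor V E r {} {}" by (simp add: shallow_minor_def)
  then have neA: "A \<noteq> {}" by (auto simp: A_def)
  have "Max A \<le> real N ^ p * real gg ^ 2"
    using finA neA bound by (intro Max.boundedI) (auto simp: A_def)
  then show ?thesis by (simp add: nabla_def A_def N_def p_def gg_def)
qed


end
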